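(* Let $U$ be a finite set of men and $W_1\subseteq W_2$ finite sets of women, with each man having a strict total order over $W_2$ and each woman a strict total order over $U$. Let $\Delta_1$ be the set of stable matchings of the instance $(U,W_1)$ and $\Delta_2$ the set of stable matchings of the instance $(U,W_2)$. Let $(M_1,M_2)\in\Delta_1\times\Delta_2$ and let $M_1'\in\Delta_1$ be such that $M_1'$ men-dominates $M_1$. Then there exists $M_2'\in\Delta_2$ such that $|M_1'\setminus M_2'|\le |M_1\setminus M_2|$.
   Context: A matching between a set of men $U$ and a set of women $W$ is a set of pairs $(u,w)\in U\times W$ such that every person belongs to at most one pair; if $(u,w)$ is in the matching, $w$ is the partner of $u$ and vice versa. Preferences are strict total orders; for an instance $(U,W')$ with $W'\subseteq W_2$, the preferences are the restrictions of the given ones. A blocking pair of a matching $M$ is a pair $(u,w)\notin M$ such that ($u$ is unmatched in $M$ or $u$ prefers $w$ to his partner in $M$) and ($w$ is unmatched in $M$ or $w$ prefers $u$ to her partner in $M$). A matching is stable if it has no blocking pair. Given two stable matchings $M,M'$ of the same instance, $M$ men-dominates $M'$ if every man's partner in $M$ is at least as good for him as his partner in $M'$ (in particular he is matched in $M$ whenever matched in $M'$). Matchings are viewed as sets of pairs, so $|M_1\setminus M_2|$ is the number of pairs of $M_1$ not in $M_2$. *)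

theory Defs
  imports Main
begin

text \<open>Preferences: (w, w') \<in> PM u means man u strictly prefers w to w';
  (u, u') \<in> PW w means woman w strictly prefers u to u'.\<close>

definition matching :: "'m set \<Rightarrow> 'w set \<Rightarrow> ('m \<times> 'w) set \<Rightarrow> bool" where
  "matching U W M \<longleftrightarrow> M \<subseteq> U \<times> W \<and>
     (\<forall>u w w'. (u, w) \<in> M \<and> (u, w') \<in> M \<longrightarrow> w = w') \<and>
     (\<forall>u u' w. (u, w) \<in> M \<and> (u', w) \<in> M \<longrightarrow> u = u')"

definition unmatched_man :: "('m \<times> 'w) set \<Rightarrow> 'm \<Rightarrow> bool" where
  "unmatched_man M u \<longleftrightarrow> (\<forall>w. (u, w) \<notin> M)"

definition unmatched_woman :: "('m \<times> 'w) set \<Rightarrow> 'w \<Rightarrow> bool" where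
  "unmatched_woman M w \<longleftrightarrow> (\<forall>u. (u, w) \<notin> M)"

definition blocking_pair ::
  "('m \<Rightarrow> ('w \<times> 'w) set) \<Rightarrow> ('w \<Rightarrow> ('m \<times> 'm) set) \<Rightarrow> ('m \<times> 'w) set \<Rightarrow> 'm \<Rightarrow> 'w \<Rightarrow> bool" where
  "blocking_pair PM PW M u w \<longleftrightarrow> (u, w) \<notin> M \<and>
     (unmatched_man M u \<or> (\<exists>w'. (u, w') \<in> M \<and> (w, w') \<in> PM u)) \<and>
     (unmatched_woman M w \<or> (\<exists>u'. (u', w) \<in> M \<and> (u, u') \<in> PW w))"

definition stable ::
  "'m set \<Rightarrow> 'w set \<Rightarrow> ('m \<Rightarrow> ('w \<times> 'w) set) \<Rightarrow> ('w \<Rightarrow> ('m \<times> 'm) set) \<Rightarrow> ('m \<times> 'w) set \<Rightarrow> bool" where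
  "stable U W PM PW M \<longleftrightarrow> matching U W M \<and>
     (\<forall>u\<in>U. \<forall>w\<in>W. \<not> blocking_pair PM PW M u w)"

definition men_dominates ::
  "'m set \<Rightarrow> ('m \<Rightarrow> ('w \<times> 'w) set) \<Rightarrow> ('m \<times> 'w) set \<Rightarrow> ('m \<times> 'w) set \<Rightarrow> bool" where
  "men_dominates U PM M M' \<longleftrightarrow>
     (\<forall>u\<in>U. \<forall>w'. (u, w') \<in> M' \<longrightarrow> (\<exists>w. (u, w) \<in> M \<and> (w = w' \<or> (w, w') \<in> PM u)))"

end

theory Submission
  imports Defs
begin

theorem mainTheorem1:
  fixes U :: "'m set" and W1 W2 :: "'w set"
    and PM :: "'m \<Rightarrow> ('w \<times> 'w) set" and PW :: "'w \<Rightarrow> ('m \<times> 'm) set"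
    and M1 M2 M1' :: "('m \<times> 'w) set"
  assumes "finite U" and "finite W2" and "W1 \<subseteq> W2"
    and "\<forall>u\<in>U. strict_linear_order_on W2 (PM u)"
    and "\<forall>w\<in>W2. strict_linear_order_on U (PW w)"
    and "stable U W1 PM PW M1"
    and "stable U W2 PM PW M2"
    and "stable U W1 PM PW M1'"
    and "men_dominates U PM M1' M1"
  shows "\<exists>M2'. stable U W2 PM PW M2' \<and> card (M1' - M2') \<le> card (M1 - M2)"
proof -
  note fU = assms(1) and fW = assms(2) and W12 = assms(3)
  have trM: "\<And>u a b c. u \<in> U \<Longrightarrow> (a,b) \<in> PM u \<Longrightarrow> (b,c) \<in> PM u \<Longrightarrow> (a,c) \<in> PM u"
    using assms(4) unfolding strict_linear_order_on_def trans_def by blast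
  have irM: "\<And>u a. u \<in> U \<Longrightarrow> (a,a) \<notin> PM u"
    using assms(4) unfolding strict_linear_order_on_def irrefl_def by blast
  have toM: "\<And>u a b. u \<in> U \<Longrightarrow> a \<in> W2 \<Longrightarrow> b \<in> W2 \<Longrightarrow> a \<noteq> b \<Longrightarrow> (a,b) \<in> PM u \<or> (b,a) \<in> PM u"
    using assms(4) unfolding strict_linear_order_on_def total_on_def by blast
  have irW: "\<And>w a. w \<in> W2 \<Longrightarrow> (a,a) \<notin> PW w"
    using assms(5) unfolding strict_linear_order_on_def irrefl_def by blast
  have toW: "\<And>w a b. w \<in> W2 \<Longrightarrow> a \<in> U \<Longrightarrow> b \<in> U \<Longrightarrow> a \<noteq> b \<Longrightarrow> (a,b) \<in> PW w \<or> (b,a) \<in> PW w"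
    using assms(5) unfolding strict_linear_order_on_def total_on_def by blast
  define A where "A = M1'"
  define B where "B = M2"
  have AsubU: "A \<subseteq> U \<times> W1" and Am: "\<And>u w w'. (u,w) \<in> A \<Longrightarrow> (u,w') \<in> A \<Longrightarrow> w = w'"
    and Aw: "\<And>u u' w. (u,w) \<in> A \<Longrightarrow> (u',w) \<in> A \<Longrightarrow> u = u'"
    and Ast: "\<And>u w. u \<in> U \<Longrightarrow> w \<in> W1 \<Longrightarrow> \<not> blocking_pair PM PW A u w"
    using assms(8) unfolding A_def stable_def matching_def by blast+
  have BsubU: "B \<subseteq> U \<times> W2" and Bm: "\<And>u w w'. (u,w) \<in> B \<Longrightarrow> (u,w') \<in> B \<Longrightarrow> w = w'"
    and Bw: "\<And>u u' w. (u,w) \<in> B \<Longrightarrow> (u',w) \<in> B \<Longrightarrow> u = u'"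
    and Bst: "\<And>u w. u \<in> U \<Longrightarrow> w \<in> W2 \<Longrightarrow> \<not> blocking_pair PM PW B u w"
    using assms(7) unfolding B_def stable_def matching_def by blast+
  have M1sub: "M1 \<subseteq> U \<times> W1" and M1m: "\<And>u w w'. (u,w) \<in> M1 \<Longrightarrow> (u,w') \<in> M1 \<Longrightarrow> w = w'"
    and M1w: "\<And>u u' w. (u,w) \<in> M1 \<Longrightarrow> (u',w) \<in> M1 \<Longrightarrow> u = u'"
    and M1st: "\<And>u w. u \<in> U \<Longrightarrow> w \<in> W1 \<Longrightarrow> \<not> blocking_pair PM PW M1 u w"
    using assms(6) unfolding stable_def matching_def by blast+
  have dom: "\<And>u w'. u \<in> U \<Longrightarrow> (u,w') \<in> M1 \<Longrightarrow> \<exists>w. (u,w) \<in> A \<and> (w = w' \<or> (w,w') \<in> PM u)"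
    using assms(9) unfolding A_def men_dominates_def by blast
  define D where "D = {u. \<exists>w. (u,w) \<in> A \<and> (\<forall>w'. (u,w') \<in> B \<longrightarrow> (w,w') \<in> PM u)}"
  define J where "J = {p \<in> A. fst p \<in> D} \<union> {p \<in> B. fst p \<notin> D}"
  have DU: "D \<subseteq> U" using AsubU unfolding D_def by auto
  have notD: "\<And>u w. u \<notin> D \<Longrightarrow> (u,w) \<in> A \<Longrightarrow> \<exists>w'. (u,w') \<in> B \<and> (w,w') \<notin> PM u"
    unfolding D_def by blast
  have inD: "\<And>u w w'. u \<in> D \<Longrightarrow> (u,w) \<in> A \<Longrightarrow> (u,w') \<in> B \<Longrightarrow> (w,w') \<in> PM u"
    unfolding D_def using Am by blast
  have DA: "\<And>u. u \<in> D \<Longrightarrow> \<exists>w. (u,w) \<in> A" unfolding D_def by blast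
  have JA: "\<And>u w. (u,w) \<in> J \<Longrightarrow> u \<in> D \<Longrightarrow> (u,w) \<in> A" unfolding J_def by auto
  have JB: "\<And>u w. (u,w) \<in> J \<Longrightarrow> u \<notin> D \<Longrightarrow> (u,w) \<in> B" unfolding J_def by auto
  have AJ: "\<And>u w. (u,w) \<in> A \<Longrightarrow> u \<in> D \<Longrightarrow> (u,w) \<in> J" unfolding J_def by auto
  have BJ: "\<And>u w. (u,w) \<in> B \<Longrightarrow> u \<notin> D \<Longrightarrow> (u,w) \<in> J" unfolding J_def by auto
  have Jsub: "J \<subseteq> U \<times> W2" using AsubU BsubU W12 unfolding J_def by auto
  have Jm: "\<And>u w w'. (u,w) \<in> J \<Longrightarrow> (u,w') \<in> J \<Longrightarrow> w = w'"
    using JA JB Am Bm by metis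
  have Jw: "\<And>u u' w. (u,w) \<in> J \<Longrightarrow> (u',w) \<in> J \<Longrightarrow> u = u'"
  proof -
    have key: "u = u'" if h: "(u,w) \<in> A" "u \<in> D" "(u',w) \<in> B" "u' \<notin> D" for u u' w
    proof (rule ccontr)
      assume ne: "u \<noteq> u'"
      have uU: "u \<in> U" and wW1: "w \<in> W1" using h AsubU by auto
      have u'U: "u' \<in> U" and wW: "w \<in> W2" using h BsubU by auto
      have c1: "unmatched_man B u \<or> (\<exists>w'. (u,w') \<in> B \<and> (w,w') \<in> PM u)"
        using inD[OF h(2) h(1)] unfolding unmatched_man_def by blast
      have c2: "unmatched_man A u' \<or> (\<exists>w'. (u',w') \<in> A \<and> (w,w') \<in> PM u')"
      proof (cases "\<exists>w'. (u',w') \<in> A")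
        case True
        then obtain w' where w': "(u',w') \<in> A" by blast
        have "w' \<noteq> w" using Aw[OF h(1)] w' ne by blast
        moreover obtain w'' where "(u',w'') \<in> B" "(w',w'') \<notin> PM u'" using notD[OF h(4) w'] by blast
        moreover have "w'' = w" using Bm h(3) calculation(2) by blast
        moreover have "w' \<in> W2" using w' AsubU W12 by auto
        ultimately have "(w,w') \<in> PM u'" using toM[OF u'U] wW by blast
        then show ?thesis using w' by blast
      qed (auto simp: unmatched_man_def)
      from toW[OF wW uU u'U ne] show False
      proof
        assume "(u,u') \<in> PW w"
        hence "blocking_pair PM PW B u w" unfolding blocking_pair_def
          using c1 h(3) Bw ne by blast
        then show False using Bst uU wW by blast
      next
        assume "(u',u) \<in> PW w"
        hence "blocking_pair PM PW A u' w" unfolding blocking_pair_def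
          using c2 h(1) Aw ne by blast
        then show False using Ast u'U wW1 by blast
      qed
    qed
    fix u u' w assume "(u,w) \<in> J" "(u',w) \<in> J"
    then show "u = u'" using JA JB Aw Bw key by metis
  qed
  have matchJ: "matching U W2 J" unfolding matching_def using Jsub Jm Jw by blast
  define SA where "SA = snd ` (A \<inter> D \<times> UNIV)"
  define SB where "SB = snd ` (B \<inter> D \<times> UNIV)"
  have fA: "finite A" using AsubU fU fW W12 by (meson finite_SigmaI finite_subset subset_trans Sigma_mono order_refl)
  have fB: "finite B" using BsubU fU fW by (meson finite_SigmaI finite_subset)
  have fD: "finite D" using DU fU finite_subset by blast
  have SAB: "SA \<subseteq> SB"
  proof
    fix w assume "w \<in> SA"
    then obtain u where uw: "(u,w) \<in> A" "u \<in> D" unfolding SA_def by auto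
    have uU: "u \<in> U" and wW1: "w \<in> W1" using uw AsubU by auto
    have nB: "(u,w) \<notin> B" using inD[OF uw(2) uw(1)] irM[OF uU] by blast
    have "\<exists>u4. (u4,w) \<in> B"
    proof (rule ccontr)
      assume "\<not> ?thesis"
      hence "blocking_pair PM PW B u w" unfolding blocking_pair_def unmatched_man_def unmatched_woman_def
        using nB inD[OF uw(2) uw(1)] by blast
      then show False using Bst uU wW1 W12 by blast
    qed
    then obtain u4 where u4: "(u4,w) \<in> B" by blast
    have "u4 \<in> D"
    proof (rule ccontr)
      assume "u4 \<notin> D"
      hence "(u4,w) \<in> J" using BJ u4 by blast
      moreover have "(u,w) \<in> J" using AJ uw by blast
      ultimately have "u4 = u" using Jw by blast
      then show False using nB u4 by blast
    qed
    then show "w \<in> SB" unfolding SB_def using u4 by force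
  qed
  have cSA: "card SA = card D"
  proof -
    have "inj_on snd (A \<inter> D \<times> UNIV)" unfolding inj_on_def using Aw by auto
    hence "card SA = card (A \<inter> D \<times> UNIV)" unfolding SA_def by (rule card_image)
    also have "\<dots> = card (fst ` (A \<inter> D \<times> UNIV))"
      by (rule card_image[symmetric]) (auto simp: inj_on_def intro: Am)
    also have "fst ` (A \<inter> D \<times> UNIV) = D" using DA by force
    finally show ?thesis .
  qed
  have cSB: "card SB \<le> card D"
  proof -
    have "card SB \<le> card (B \<inter> D \<times> UNIV)" unfolding SB_def
      by (rule card_image_le) (use fB in auto)
    also have "\<dots> = card (fst ` (B \<inter> D \<times> UNIV))"
      by (rule card_image[symmetric]) (auto simp: inj_on_def intro: Bm)
    also have "\<dots> \<le> card D" by (rule card_mono[OF fD]) auto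
    finally show ?thesis .
  qed
  have fSB: "finite SB" unfolding SB_def using fB by auto
  have SBA: "SB \<subseteq> SA" using card_subset_eq[OF fSB SAB] cSA cSB SAB by (metis le_antisym card_mono[OF fSB SAB] order_refl)
  have stJ: "stable U W2 PM PW J"
    unfolding stable_def
  proof (intro conjI matchJ ballI notI)
    fix u w assume uU: "u \<in> U" and wW: "w \<in> W2" and bp: "blocking_pair PM PW J u w"
    have nJ: "(u,w) \<notin> J" using bp unfolding blocking_pair_def by blast
    have mc: "unmatched_man J u \<or> (\<exists>w'. (u,w') \<in> J \<and> (w,w') \<in> PM u)"
      using bp unfolding blocking_pair_def by blast
    have wc: "unmatched_woman J w \<or> (\<exists>u'. (u',w) \<in> J \<and> (u,u') \<in> PW w)"
      using bp unfolding blocking_pair_def by blast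
    have mA: "unmatched_man A u \<or> (\<exists>w'. (u,w') \<in> A \<and> (w,w') \<in> PM u)"
     and mB: "unmatched_man B u \<or> (\<exists>w'. (u,w') \<in> B \<and> (w,w') \<in> PM u)"
    proof -
      have "(unmatched_man A u \<or> (\<exists>w'. (u,w') \<in> A \<and> (w,w') \<in> PM u)) \<and>
            (unmatched_man B u \<or> (\<exists>w'. (u,w') \<in> B \<and> (w,w') \<in> PM u))"
      proof (cases "unmatched_man J u")
        case True
        hence "u \<notin> D" using DA AJ unfolding unmatched_man_def by blast
        then show ?thesis using True notD BJ unfolding unmatched_man_def by blast
      next
        case False
        then obtain w' where w': "(u,w') \<in> J" "(w,w') \<in> PM u" using mc by blast
        show ?thesis
        proof (cases "u \<in> D")
          case True
          hence "(u,w') \<in> A" using JA w' by blast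
          moreover have "\<And>w''. (u,w'') \<in> B \<Longrightarrow> (w,w'') \<in> PM u"
            using inD[OF True calculation] trM[OF uU] w'(2) by blast
          ultimately show ?thesis using w' unfolding unmatched_man_def by blast
        next
          case nd: False
          hence wB: "(u,w') \<in> B" using JB w' by blast
          have "\<And>w''. (u,w'') \<in> A \<Longrightarrow> (w,w'') \<in> PM u"
          proof -
            fix w'' assume a: "(u,w'') \<in> A"
            obtain w3 where "(u,w3) \<in> B" "(w'',w3) \<notin> PM u" using notD[OF nd a] by blast
            hence nn: "(w'',w') \<notin> PM u" using Bm wB by blast
            have "w'' \<in> W2" "w' \<in> W2" using a wB AsubU BsubU W12 by auto
            hence "w'' = w' \<or> (w',w'') \<in> PM u" using toM[OF uU] nn by blast
            then show "(w,w'') \<in> PM u" using trM[OF uU] w'(2) by blast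
          qed
          then show ?thesis using wB w' unfolding unmatched_man_def by blast
        qed
      qed
      then show "unmatched_man A u \<or> (\<exists>w'. (u,w') \<in> A \<and> (w,w') \<in> PM u)"
        and "unmatched_man B u \<or> (\<exists>w'. (u,w') \<in> B \<and> (w,w') \<in> PM u)" by blast+
    qed
    show False
    proof (cases "unmatched_woman J w")
      case False
      then obtain u' where u': "(u',w) \<in> J" "(u,u') \<in> PW w" using wc by blast
      show False
      proof (cases "u' \<in> D")
        case True
        hence a: "(u',w) \<in> A" using JA u' by blast
        hence wW1: "w \<in> W1" using AsubU by auto
        have "(u,w) \<notin> A" using Aw a u'(2) irW[OF wW] by blast
        hence "blocking_pair PM PW A u w" unfolding blocking_pair_def using mA a u' by blast
        then show False using Ast uU wW1 by blast
      next
        case False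
        hence a: "(u',w) \<in> B" using JB u' by blast
        have "(u,w) \<notin> B" using Bw a u'(2) irW[OF wW] by blast
        hence "blocking_pair PM PW B u w" unfolding blocking_pair_def using mB a u' by blast
        then show False using Bst uU wW by blast
      qed
    next
      case True
      have "\<forall>u'. (u',w) \<notin> B"
      proof (intro allI notI)
        fix u' assume a: "(u',w) \<in> B"
        show False
        proof (cases "u' \<in> D")
          case True
          hence "w \<in> SB" unfolding SB_def using a by force
          hence "w \<in> SA" using SBA by blast
          then obtain u5 where "(u5,w) \<in> A" "u5 \<in> D" unfolding SA_def by auto
          then show False using AJ True \<open>unmatched_woman J w\<close> unfolding unmatched_woman_def by blast
        next
          case False
          then show False using BJ a \<open>unmatched_woman J w\<close> unfolding unmatched_woman_def by blast
        qed
      qed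
      hence "blocking_pair PM PW B u w" unfolding blocking_pair_def unmatched_woman_def using mB by blast
      then show False using Bst uU wW by blast
    qed
  qed
  have fM1: "finite M1" using M1sub fU fW W12 by (meson finite_SigmaI finite_subset subset_trans Sigma_mono order_refl)
  have cAM1: "card A = card M1"
  proof -
    have cA1: "card A = card (fst ` A)" by (rule card_image[symmetric]) (auto simp: inj_on_def intro: Am)
    have cA2: "card A = card (snd ` A)" by (rule card_image[symmetric]) (auto simp: inj_on_def intro: Aw)
    have cM1: "card M1 = card (fst ` M1)" by (rule card_image[symmetric]) (auto simp: inj_on_def intro: M1m)
    have cM2: "card M1 = card (snd ` M1)" by (rule card_image[symmetric]) (auto simp: inj_on_def intro: M1w)
    have s1: "fst ` M1 \<subseteq> fst ` A" using dom M1sub by force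
    have s2: "snd ` A \<subseteq> snd ` M1"
    proof
      fix w assume "w \<in> snd ` A"
      then obtain u where uw: "(u,w) \<in> A" by auto
      have uU: "u \<in> U" and wW1: "w \<in> W1" using uw AsubU by auto
      show "w \<in> snd ` M1"
      proof (rule ccontr)
        assume nw: "w \<notin> snd ` M1"
        have "unmatched_man M1 u \<or> (\<exists>w'. (u,w') \<in> M1 \<and> (w,w') \<in> PM u)"
        proof (cases "\<exists>w1. (u,w1) \<in> M1")
          case True
          then obtain w1 where w1: "(u,w1) \<in> M1" by blast
          obtain w2 where "(u,w2) \<in> A" "w2 = w1 \<or> (w2,w1) \<in> PM u" using dom[OF uU w1] by blast
          moreover have "w2 = w" using Am uw calculation(1) by blast
          moreover have "w1 \<noteq> w" using nw w1 by force
          ultimately show ?thesis using w1 by blast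
        qed (auto simp: unmatched_man_def)
        moreover have "(u,w) \<notin> M1" using nw by force
        moreover have "unmatched_woman M1 w" using nw unfolding unmatched_woman_def by force
        ultimately have "blocking_pair PM PW M1 u w" unfolding blocking_pair_def by blast
        then show False using M1st uU wW1 by blast
      qed
    qed
    have "card (fst ` M1) \<le> card (fst ` A)" using s1 fA by (simp add: card_mono)
    moreover have "card (snd ` A) \<le> card (snd ` M1)" using s2 fM1 by (simp add: card_mono)
    ultimately show ?thesis using cA1 cA2 cM1 cM2 by linarith
  qed
  have cInt: "card (M1 \<inter> B) \<le> card (A \<inter> J)"
  proof -
    have "card (M1 \<inter> B) = card (fst ` (M1 \<inter> B))"
      by (rule card_image[symmetric]) (auto simp: inj_on_def intro: M1m)
    also have "\<dots> \<le> card (fst ` (A \<inter> J))"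
    proof (rule card_mono)
      show "finite (fst ` (A \<inter> J))" using fA by auto
      show "fst ` (M1 \<inter> B) \<subseteq> fst ` (A \<inter> J)"
      proof
        fix u assume "u \<in> fst ` (M1 \<inter> B)"
        then obtain w where w: "(u,w) \<in> M1" "(u,w) \<in> B" by auto
        have uU: "u \<in> U" using w M1sub by auto
        obtain w0 where w0: "(u,w0) \<in> A" "w0 = w \<or> (w0,w) \<in> PM u" using dom[OF uU w(1)] by blast
        have "(u,w0) \<in> J"
        proof (cases "u \<in> D")
          case True then show ?thesis using AJ w0 by blast
        next
          case False
          have "w0 = w"
          proof (rule ccontr)
            assume "w0 \<noteq> w"
            hence "(w0,w) \<in> PM u" using w0 by blast
            hence "u \<in> D" unfolding D_def using w0(1) Bm w(2) by blast
            then show False using False by blast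
          qed
          then show ?thesis using BJ w(2) False by blast
        qed
        then show "u \<in> fst ` (A \<inter> J)" using w0 by force
      qed
    qed
    also have "\<dots> = card (A \<inter> J)"
      by (rule card_image) (auto simp: inj_on_def intro: Am)
    finally show ?thesis .
  qed
  have "card (A - J) = card A - card (A \<inter> J)" by (rule card_Diff_subset_Int) (use fA in auto)
  moreover have "card (M1 - B) = card M1 - card (M1 \<inter> B)" by (rule card_Diff_subset_Int) (use fM1 in auto)
  ultimately have "card (A - J) \<le> card (M1 - B)" using cAM1 cInt by linarith
  then show ?thesis using stJ unfolding A_def B_def by blast
qed

end
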